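(* Let $(A,p)$ be a financial market with a riskless asset with $p_1=1$, and let $(\Theta,D)$ be the corresponding matrix scheme. Then $(A,p)$ contains no arbitrage portfolio if and only if for every subset $D'\subseteq D$ with $|D'|\ge 2$ the matrix scheme $(\Theta,D')$ contains uncertainty.
   Context: Vector order: for $x,y\in\mathbb{R}^k$, $x\le y$ means $x_i\le y_i$ for all $i$, and $x<y$ means $x\le y$ and $x\neq y$. A financial market with a riskless asset is a pair $(A,p)$ with $A\in\mathbb{R}^{n\times m}$, $p\in\mathbb{R}^n$, such that $A_{1j}=1$ for all $j\in\{1,\dots,m\}$ (here we additionally assume $p_1=1$). A portfolio $x\in\mathbb{R}^n$ is an arbitrage portfolio on $(A,p)$ if either ($p^Tx\le 0$ and $A^Tx>0$) or ($p^Tx<0$ and $A^Tx\ge 0$). The corresponding matrix scheme is $(\Theta,D)$ with $\Theta=\{1,\dots,m\}$, $B=A-[p\ p\ \cdots\ p]$ (i.e. $B_{i\theta}=A_{i\theta}-p_i$), and $D=\{B^Tx: x\in\mathbb{R}^n\}\subseteq\mathbb{R}^m$, each vector viewed as a real function on $\Theta$. A matrix scheme is a pair $(\Theta,D')$ with $D'$ a set of real functions on $\Theta$. A preference relation on a set $X$ is an asymmetric ($x\prec y\Rightarrow$ not $y\prec x$) and negatively transitive (not $x\prec y$ and not $y\prec z\Rightarrow$ not $x\prec z$) binary relation. Domination on $D'$: $d_1\prec d_2$ iff $d_1(\theta)\le d_2(\theta)$ for all $\theta$ and $d_1(\theta^* )<d_2(\theta^* )$ for some $\theta^*$. A projection of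 preference of consequences in $(\Theta,D')$ is a preference relation $\prec^P$ on $D'$ with $d_1\prec d_2\Rightarrow d_1\prec^P d_2$ for all $d_1,d_2\in D'$. The scheme $(\Theta,D')$ contains uncertainty if this projection is not unique. *)

theory Defs
  imports "HOL-Analysis.Analysis"
begin

definition vle :: "real^'k \<Rightarrow> real^'k \<Rightarrow> bool" where
  "vle x y \<longleftrightarrow> (\<forall>i. x $ i \<le> y $ i)"

definition vlt :: "real^'k \<Rightarrow> real^'k \<Rightarrow> bool" where
  "vlt x y \<longleftrightarrow> vle x y \<and> x \<noteq> y"

text \<open>Market (A,p): A is an n x m matrix (rows = assets 'n, columns = states 'm),
  p the price vector. Arbitrage portfolio x.\<close>
definition arbitrage_portfolio :: "real^'m^'n \<Rightarrow> real^'n \<Rightarrow> real^'n \<Rightarrow> bool" where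
  "arbitrage_portfolio A p x \<longleftrightarrow>
     (p \<bullet> x \<le> 0 \<and> vlt 0 (transpose A *v x)) \<or> (p \<bullet> x < 0 \<and> vle 0 (transpose A *v x))"

definition scheme_B :: "real^'m^'n \<Rightarrow> real^'n \<Rightarrow> real^'m^'n" where
  "scheme_B A p = (\<chi> i j. A $ i $ j - p $ i)"

definition scheme_D :: "real^'m^'n \<Rightarrow> real^'n \<Rightarrow> (real^'m) set" where
  "scheme_D A p = {transpose (scheme_B A p) *v x | x. True}"

definition dominated :: "real^'m \<Rightarrow> real^'m \<Rightarrow> bool" where
  "dominated d1 d2 \<longleftrightarrow> (\<forall>\<theta>. d1 $ \<theta> \<le> d2 $ \<theta>) \<and> (\<exists>\<theta>. d1 $ \<theta> < d2 $ \<theta>)"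

definition preference_on :: "'a set \<Rightarrow> ('a \<times> 'a) set \<Rightarrow> bool" where
  "preference_on X R \<longleftrightarrow> R \<subseteq> X \<times> X \<and>
     (\<forall>x\<in>X. \<forall>y\<in>X. (x, y) \<in> R \<longrightarrow> (y, x) \<notin> R) \<and>
     (\<forall>x\<in>X. \<forall>y\<in>X. \<forall>z\<in>X. (x, y) \<notin> R \<and> (y, z) \<notin> R \<longrightarrow> (x, z) \<notin> R)"

definition projection_of_preference :: "(real^'m) set \<Rightarrow> ((real^'m) \<times> (real^'m)) set \<Rightarrow> bool" where
  "projection_of_preference D' R \<longleftrightarrow> preference_on D' R \<and>
     (\<forall>d1\<in>D'. \<forall>d2\<in>D'. dominated d1 d2 \<longrightarrow> (d1, d2) \<in> R)"

definition contains_uncertainty :: "(real^'m) set \<Rightarrow> bool" where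
  "contains_uncertainty D' \<longleftrightarrow>
     (\<exists>R1 R2. projection_of_preference D' R1 \<and> projection_of_preference D' R2 \<and> R1 \<noteq> R2)"

end

theory Submission
  imports Defs
begin

declare transpose_matrix_vector[simp del]

lemma BTx:
  "transpose (scheme_B A p) *v x = (\<chi> j. (transpose A *v x) $ j - p \<bullet> x)"
proof -
  have "(transpose (scheme_B A p) *v x) $ j = (transpose A *v x) $ j - p \<bullet> x" for j
  proof -
    have "(transpose (scheme_B A p) *v x) $ j = (\<Sum>i\<in>UNIV. A $ i $ j * x $ i - p $ i * x $ i)"
      by (simp add: matrix_vector_mult_def transpose_def scheme_B_def left_diff_distrib)
    also have "\<dots> = (transpose A *v x) $ j - p \<bullet> x"
      by (simp add: sum_subtractf matrix_vector_mult_def transpose_def inner_vec_def)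
    finally show ?thesis .
  qed
  then show ?thesis by (simp add: vec_eq_iff)
qed

lemma dom_vlt: "dominated 0 d \<Longrightarrow> vlt 0 d"
proof -
  assume h: "dominated 0 d"
  then obtain t where t: "0 < d $ t" unfolding dominated_def by auto
  have "0 \<noteq> d"
  proof
    assume "0 = d"
    then have "d $ t = 0" by simp
    with t show False by simp
  qed
  with h show ?thesis unfolding dominated_def vlt_def vle_def by simp
qed

lemma L1:
  fixes A :: "real^'m^'n" and p :: "real^'n" and i1 :: 'n
  assumes a1: "\<forall>j. A $ i1 $ j = 1" and a2: "p $ i1 = 1"
  shows "(\<exists>x. arbitrage_portfolio A p x) \<longleftrightarrow> (\<exists>d\<in>scheme_D A p. dominated 0 d)"
proof
  assume "\<exists>x. arbitrage_portfolio A p x"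
  then obtain x where ax: "arbitrage_portfolio A p x" by blast
  let ?d = "transpose (scheme_B A p) *v x"
  have dj: "?d $ j = (transpose A *v x) $ j - p \<bullet> x" for j unfolding BTx by simp
  have "dominated 0 ?d"
    using ax unfolding arbitrage_portfolio_def
  proof
    assume h: "p \<bullet> x \<le> 0 \<and> vlt 0 (transpose A *v x)"
    then have ge: "\<forall>j. 0 \<le> (transpose A *v x) $ j" and ne: "transpose A *v x \<noteq> 0"
      by (auto simp: vlt_def vle_def)
    from ne obtain j where "(transpose A *v x) $ j \<noteq> 0" by (auto simp: vec_eq_iff)
    with ge have "0 < (transpose A *v x) $ j" by (metis order_le_less)
    moreover have "\<forall>t. 0 \<le> ?d $ t" using ge h by (auto simp add: dj intro: order_trans)
    moreover have "0 < ?d $ j" using h \<open>0 < (transpose A *v x) $ j\<close> by (simp add: dj)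
    ultimately show ?thesis unfolding dominated_def by auto
  next
    assume h: "p \<bullet> x < 0 \<and> vle 0 (transpose A *v x)"
    then have ge: "\<forall>j. 0 \<le> (transpose A *v x) $ j" by (auto simp: vle_def)
    have "\<forall>t. 0 < ?d $ t" using ge h by (auto simp add: dj intro: less_le_trans)
    then show ?thesis unfolding dominated_def by (auto intro: less_imp_le)
  qed
  then show "\<exists>d\<in>scheme_D A p. dominated 0 d" unfolding scheme_D_def by blast
next
  assume "\<exists>d\<in>scheme_D A p. dominated 0 d"
  then obtain x where dx: "dominated 0 (transpose (scheme_B A p) *v x)"
    unfolding scheme_D_def by blast
  define y where "y = x - (p \<bullet> x) *\<^sub>R axis i1 1"
  have py: "p \<bullet> y = 0" using a2
    by (simp add: y_def inner_diff_right inner_axis)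
  have Ay: "(transpose A *v y) $ j = (transpose A *v x) $ j - p \<bullet> x" for j
  proof -
    have "(transpose A *v y) $ j = (transpose A *v x) $ j - (p \<bullet> x) * (transpose A *v axis i1 1) $ j"
      by (simp add: y_def matrix_vector_mult_diff_distrib matrix_vector_mult_scaleR)
    also have "(transpose A *v axis i1 (1::real)) $ j = 1"
      using a1 by (simp add: matrix_vector_mult_def transpose_def axis_def if_distrib cong: if_cong)
    finally show ?thesis by simp
  qed
  have e: "transpose (scheme_B A p) *v x = transpose A *v y"
    by (simp add: BTx Ay vec_eq_iff)
  have "dominated 0 (transpose A *v y)" using dx by (simp only: e)
  then have "vlt 0 (transpose A *v y)" by (rule dom_vlt)
  then show "\<exists>x. arbitrage_portfolio A p x"
    using py unfolding arbitrage_portfolio_def by (intro exI[of _ y]) simp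
qed

lemma D_diff:
  assumes "a \<in> scheme_D A p" "b \<in> scheme_D A p"
  shows "b - a \<in> scheme_D A p"
proof -
  obtain x y where "a = transpose (scheme_B A p) *v x" "b = transpose (scheme_B A p) *v y"
    using assms unfolding scheme_D_def by blast
  then have "b - a = transpose (scheme_B A p) *v (y - x)"
    by (simp add: matrix_vector_mult_diff_distrib)
  then show ?thesis unfolding scheme_D_def by blast
qed

lemma D_zero: "0 \<in> scheme_D A p"
  unfolding scheme_D_def by (rule CollectI, rule exI[of _ 0]) simp

lemma dom_diff: "dominated a b \<longleftrightarrow> dominated 0 (b - a)"
  unfolding dominated_def by simp

lemma two_elems:
  assumes "infinite D' \<or> card D' \<ge> 2"
  obtains a b where "a \<in> D'" "b \<in> D'" "a \<noteq> b"
proof -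
  have "\<exists>a\<in>D'. \<exists>b\<in>D'. a \<noteq> b"
  proof (rule ccontr)
    assume "\<not> ?thesis"
    then have "D' = {} \<or> (\<exists>a. D' = {a})" by blast
    then show False using assms by auto
  qed
  then show ?thesis using that by blast
qed

lemma L3:
  assumes nd: "\<forall>d1\<in>D'. \<forall>d2\<in>D'. \<not> dominated d1 d2"
    and ab: "a \<in> D'" "b \<in> D'" "a \<noteq> b"
  shows "contains_uncertainty D'"
proof -
  define R where "R = {(a, y) | y. y \<in> D' \<and> y \<noteq> a}"
  have p1: "projection_of_preference D' {}"
    using nd unfolding projection_of_preference_def preference_on_def by auto
  have p2: "projection_of_preference D' R"
    using nd ab(1) unfolding projection_of_preference_def preference_on_def R_def by auto
  have "R \<noteq> {}" using ab unfolding R_def by auto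
  then show ?thesis unfolding contains_uncertainty_def using p1 p2 by blast
qed

lemma L4:
  assumes "dominated 0 d"
  shows "\<not> contains_uncertainty {0, d}"
proof -
  have "projection_of_preference {0, d} R \<Longrightarrow> R = {(0, d)}" for R
    using assms unfolding projection_of_preference_def preference_on_def by blast
  then show ?thesis unfolding contains_uncertainty_def by blast
qed

theorem theorem2:
  fixes A :: "real^'m^'n" and p :: "real^'n" and i1 :: 'n
  assumes "\<forall>j. A $ i1 $ j = 1"
    and "p $ i1 = 1"
  shows "(\<not> (\<exists>x. arbitrage_portfolio A p x)) \<longleftrightarrow>
         (\<forall>D' \<subseteq> scheme_D A p. (infinite D' \<or> card D' \<ge> 2) \<longrightarrow> contains_uncertainty D')"
proof -
  have e: "(\<exists>x. arbitrage_portfolio A p x) \<longleftrightarrow> (\<exists>d\<in>scheme_D A p. dominated 0 d)"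
    by (rule L1[OF assms])
  show ?thesis
  proof
    assume na: "\<not> (\<exists>x. arbitrage_portfolio A p x)"
    show "\<forall>D' \<subseteq> scheme_D A p. (infinite D' \<or> card D' \<ge> 2) \<longrightarrow> contains_uncertainty D'"
    proof (intro allI impI)
      fix D' assume sub: "D' \<subseteq> scheme_D A p" and c: "infinite D' \<or> card D' \<ge> 2"
      obtain a b where ab: "a \<in> D'" "b \<in> D'" "a \<noteq> b" using two_elems[OF c] by blast
      have "\<forall>d1\<in>D'. \<forall>d2\<in>D'. \<not> dominated d1 d2"
      proof (intro ballI notI)
        fix d1 d2 assume "d1 \<in> D'" "d2 \<in> D'" "dominated d1 d2"
        then have "d2 - d1 \<in> scheme_D A p" "dominated 0 (d2 - d1)"
          using sub D_diff dom_diff by blast+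
        then show False using na e by blast
      qed
      then show "contains_uncertainty D'" using L3 ab by blast
    qed
  next
    assume h: "\<forall>D' \<subseteq> scheme_D A p. (infinite D' \<or> card D' \<ge> 2) \<longrightarrow> contains_uncertainty D'"
    show "\<not> (\<exists>x. arbitrage_portfolio A p x)"
    proof
      assume "\<exists>x. arbitrage_portfolio A p x"
      then obtain d where d: "d \<in> scheme_D A p" "dominated 0 d" using e by blast
      then obtain t where "0 < d $ t" unfolding dominated_def by auto
      then have "d \<noteq> 0" by auto
      then have "card {0, d} \<ge> 2" by simp
      moreover have "{0, d} \<subseteq> scheme_D A p" using d D_zero by blast
      ultimately have "contains_uncertainty {0, d}" using h by blast
      then show False using L4 d(2) by blast
    qed
  qed
qed

end
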